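(* Let $0<R_{\rm id}<R_{\rm d}$, and let $\Omega$, $\Gamma_{\rm d}$, $\Gamma_{\rm id}$, $n$, $(\overline u,\overline q)$, $\omega^*$, $v(\omega)$, $\widehat v(\omega)$, $J'(\omega)$, the iteration $\omega_{k+1}=\omega_k-\rho_kJ'(\omega_k)$, $\mu_k=\omega^*-\omega_k$ and $C_j$ be as in the context. Assume there are integers $N\ge M\ge0$ such that the initial error has a finite Fourier expansion $\mu_0=\sum_{M\le|j|\le N}a_j^{(0)}e^{ij\theta}$ on $\Gamma_{\rm id}$. If the step sizes are chosen as $\rho_k=1/C_{M+k}$ for $k=0,1,\dots,N-M$, or alternatively as $\rho_k=1/C_{N-k}$ for $k=0,1,\dots,N-M$, then $\mu_{N-M+1}=0$, i.e. $\omega_{N-M+1}=\omega^*$.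
   Context: Setting: $0<R_{\rm id}<R_{\rm d}$; $\Omega=\{(x,y): R_{\rm id}^2<x^2+y^2<R_{\rm d}^2\}$ is an annulus with outer boundary $\Gamma_{\rm d}=\{x^2+y^2=R_{\rm d}^2\}$ and inner boundary $\Gamma_{\rm id}=\{x^2+y^2=R_{\rm id}^2\}$; $(r,\theta)$ are polar coordinates; $n$ is the unit outward normal to $\partial\Omega$ (so $\partial/\partial n=\partial/\partial r$ on $\Gamma_{\rm d}$ and $\partial/\partial n=-\partial/\partial r$ on $\Gamma_{\rm id}$). Given Cauchy data $(\overline u,\overline q)$ on $\Gamma_{\rm d}$. For a boundary value $\omega$ on $\Gamma_{\rm id}$, $v(\omega)$ denotes the solution of the primary problem $-\Delta v=0$ in $\Omega$, $\partial v/\partial n=\overline q$ on $\Gamma_{\rm d}$, $v=\omega$ on $\Gamma_{\rm id}$; $\widehat v(\omega)$ denotes the solution of the adjoint problem $-\Delta \widehat v=0$ in $\Omega$, $\partial\widehat v/\partial n=2(v(\omega)-\overline u)$ on $\Gamma_{\rm d}$, $\widehat v=0$ on $\Gamma_{\rm id}$; and $J'(\omega):=-\partial\widehat v(\omega)/\partial n|_{\Gamma_{\rm id}}$. The exact boundary value $\omega^*$ is assumed to exist, i.e. $v(\omega^* )|_{\Gamma_{\rm d}}=\overline u$. Starting from $\omega_0$ and step sizes $\rho_k>0$, the iteration is $\omega_{k+1}=\omega_k-\rho_kJ'(\omega_k)$ (with exact solution of the boundary value problems), and $\mu_k:=\omega^*-\omega_k$. For integers $j$, $$C_j:=\frac{8R_{\rm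 d}^{2|j|+1}R_{\rm id}^{2|j|-1}}{(R_{\rm id}^{2|j|}+R_{\rm d}^{2|j|})^2}.$$ Functions on $\Gamma_{\rm id}$ may be complex-valued; Fourier expansions are in $e^{ij\theta}$. *)

theory Defs
  imports "HOL-Analysis.Analysis"
begin

text \<open>The plane is identified with the type complex; a point with polar
coordinates (r, theta) is r * cis theta.  Functions on a circle of radius R
are represented as functions of the angle theta (values at R * cis theta).\<close>

definition annulus :: "real \<Rightarrow> real \<Rightarrow> complex set" where
  "annulus Ri Rd = {z. Ri < cmod z \<and> cmod z < Rd}"

definition closed_annulus :: "real \<Rightarrow> real \<Rightarrow> complex set" where
  "closed_annulus Ri Rd = {z. Ri \<le> cmod z \<and> cmod z \<le> Rd}"

text \<open>Classical (C^2) solutions of the Laplace equation -Delta u = 0 on an open set S,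
for complex-valued u on the plane (x = Re z, y = Im z); ux, uy are the first
partial derivatives, uxx, uxy, uyx, uyy the second ones.\<close>

definition harmonic_C2_on :: "complex set \<Rightarrow> (complex \<Rightarrow> complex) \<Rightarrow> bool" where
  "harmonic_C2_on S u \<longleftrightarrow>
     (\<exists>ux uy uxx uxy uyx uyy.
        (\<forall>z\<in>S.
           (u has_derivative (\<lambda>h. of_real (Re h) * ux z + of_real (Im h) * uy z)) (at z) \<and>
           (ux has_derivative (\<lambda>h. of_real (Re h) * uxx z + of_real (Im h) * uxy z)) (at z) \<and>
           (uy has_derivative (\<lambda>h. of_real (Re h) * uyx z + of_real (Im h) * uyy z)) (at z) \<and>
           uxx z + uyy z = 0) \<and>
        continuous_on S uxx \<and> continuous_on S uxy \<and>
        continuous_on S uyx \<and> continuous_on S uyy)"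

text \<open>Outward normal derivative on the outer circle: d/dn = d/dr (one-sided, from inside).\<close>
definition normal_deriv_outer :: "real \<Rightarrow> real \<Rightarrow> (complex \<Rightarrow> complex) \<Rightarrow> real \<Rightarrow> complex \<Rightarrow> bool" where
  "normal_deriv_outer Ri Rd u \<theta> g \<longleftrightarrow>
     ((\<lambda>r. u (complex_of_real r * cis \<theta>)) has_vector_derivative g) (at Rd within {Ri..Rd})"

text \<open>Outward normal derivative on the inner circle: d/dn = - d/dr (one-sided, from inside).\<close>
definition normal_deriv_inner :: "real \<Rightarrow> real \<Rightarrow> (complex \<Rightarrow> complex) \<Rightarrow> real \<Rightarrow> complex \<Rightarrow> bool" where
  "normal_deriv_inner Ri Rd u \<theta> g \<longleftrightarrow>
     ((\<lambda>r. u (complex_of_real r * cis \<theta>)) has_vector_derivative (- g)) (at Ri within {Ri..Rd})"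

text \<open>Classical solution of: -Delta u = 0 in Omega, du/dn = g on Gamma_d, u = h on Gamma_id.\<close>
definition mixed_solution ::
  "real \<Rightarrow> real \<Rightarrow> (real \<Rightarrow> complex) \<Rightarrow> (real \<Rightarrow> complex) \<Rightarrow> (complex \<Rightarrow> complex) \<Rightarrow> bool" where
  "mixed_solution Ri Rd g h u \<longleftrightarrow>
     continuous_on (closed_annulus Ri Rd) u \<and>
     harmonic_C2_on (annulus Ri Rd) u \<and>
     (\<forall>\<theta>. normal_deriv_outer Ri Rd u \<theta> (g \<theta>)) \<and>
     (\<forall>\<theta>. u (complex_of_real Ri * cis \<theta>) = h \<theta>)"

definition Cj :: "real \<Rightarrow> real \<Rightarrow> int \<Rightarrow> real" where
  "Cj Ri Rd j = 8 * Rd powr (2 * \<bar>real_of_int j\<bar> + 1) * Ri powr (2 * \<bar>real_of_int j\<bar> - 1)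
                / (Ri powr (2 * \<bar>real_of_int j\<bar>) + Rd powr (2 * \<bar>real_of_int j\<bar>))\<^sup>2"

end

theory Submission
  imports Defs
begin


lemma harm_lin:
  assumes "harmonic_C2_on S u" "harmonic_C2_on S v"
  shows "harmonic_C2_on S (\<lambda>z. a * u z + b * v z)"
proof -
  obtain ux uy uxx uxy uyx uyy where U:
    "\<forall>z\<in>S. (u has_derivative (\<lambda>h. of_real (Re h) * ux z + of_real (Im h) * uy z)) (at z) \<and>
           (ux has_derivative (\<lambda>h. of_real (Re h) * uxx z + of_real (Im h) * uxy z)) (at z) \<and>
           (uy has_derivative (\<lambda>h. of_real (Re h) * uyx z + of_real (Im h) * uyy z)) (at z) \<and>
           uxx z + uyy z = 0"
     "continuous_on S uxx" "continuous_on S uxy" "continuous_on S uyx" "continuous_on S uyy"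
    using assms(1) unfolding harmonic_C2_on_def by blast
  obtain vx vy vxx vxy vyx vyy where V:
    "\<forall>z\<in>S. (v has_derivative (\<lambda>h. of_real (Re h) * vx z + of_real (Im h) * vy z)) (at z) \<and>
           (vx has_derivative (\<lambda>h. of_real (Re h) * vxx z + of_real (Im h) * vxy z)) (at z) \<and>
           (vy has_derivative (\<lambda>h. of_real (Re h) * vyx z + of_real (Im h) * vyy z)) (at z) \<and>
           vxx z + vyy z = 0"
     "continuous_on S vxx" "continuous_on S vxy" "continuous_on S vyx" "continuous_on S vyy"
    using assms(2) unfolding harmonic_C2_on_def by blast
  have D: "((\<lambda>z. a * f z + b * g z) has_derivative
       (\<lambda>h. of_real (Re h) * (a * fx z + b * gx z) + of_real (Im h) * (a * fy z + b * gy z))) (at z)"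
    if "(f has_derivative (\<lambda>h. of_real (Re h) * fx z + of_real (Im h) * fy z)) (at z)"
       "(g has_derivative (\<lambda>h. of_real (Re h) * gx z + of_real (Im h) * gy z)) (at z)"
    for f g fx fy gx gy z
    using has_derivative_add[OF has_derivative_mult_right[OF that(1), of a] has_derivative_mult_right[OF that(2), of b]]
    by (simp add: algebra_simps)
  have E: "a * uxx z + b * vxx z + (a * uyy z + b * vyy z) = 0" if "z \<in> S" for z
  proof -
    have "a * uxx z + b * vxx z + (a * uyy z + b * vyy z) = a * (uxx z + uyy z) + b * (vxx z + vyy z)"
      by (simp add: algebra_simps)
    then show ?thesis using U(1) V(1) that by simp
  qed
  show ?thesis
    unfolding harmonic_C2_on_def
    apply (rule exI[of _ "\<lambda>z. a * ux z + b * vx z"], rule exI[of _ "\<lambda>z. a * uy z + b * vy z"])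
    apply (rule exI[of _ "\<lambda>z. a * uxx z + b * vxx z"], rule exI[of _ "\<lambda>z. a * uxy z + b * vxy z"])
    apply (rule exI[of _ "\<lambda>z. a * uyx z + b * vyx z"], rule exI[of _ "\<lambda>z. a * uyy z + b * vyy z"])
    using U V
    apply (intro conjI ballI)
    apply (auto intro!: D E continuous_intros)
    done
qed

lemma harm_const: "harmonic_C2_on S (\<lambda>z. c)"
  unfolding harmonic_C2_on_def
  by (rule exI[of _ "\<lambda>z. 0"])+ auto

lemma harm_sum:
  assumes "finite I" "\<And>i. i \<in> I \<Longrightarrow> harmonic_C2_on S (f i)"
  shows "harmonic_C2_on S (\<lambda>z. \<Sum>i\<in>I. f i z)"
  using assms
proof (induction I rule: finite_induct)
  case empty then show ?case by (simp add: harm_const)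
next
  case (insert i I)
  then show ?case using harm_lin[of S "f i" "\<lambda>z. \<Sum>i\<in>I. f i z" 1 1] by simp
qed



lemma cnj_lin: "cnj (c * h) = of_real (Re h) * cnj c + of_real (Im h) * (- \<i> * cnj c)"
  by (simp add: complex_eq_iff algebra_simps)

lemma mul_lin: "c * h = of_real (Re h) * c + of_real (Im h) * (\<i> * c)"
  by (simp add: complex_eq_iff algebra_simps)

lemma harm_holo:
  assumes d1: "\<And>z. z \<in> S \<Longrightarrow> (f has_field_derivative f1 z) (at z)"
    and d2: "\<And>z. z \<in> S \<Longrightarrow> (f1 has_field_derivative f2 z) (at z)"
    and c: "continuous_on S f2"
  shows "harmonic_C2_on S f" "harmonic_C2_on S (\<lambda>z. cnj (f z))"
proof -
  have h1: "(g has_derivative (\<lambda>h. of_real (Re h) * g1 + of_real (Im h) * (\<i> * g1))) (at z)"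
    if "(g has_field_derivative g1) (at z)" for g g1 z
    using that unfolding has_field_derivative_def
    by (rule has_derivative_eq_rhs) (simp add: fun_eq_iff complex_eq_iff algebra_simps)
  have h2: "((\<lambda>z. cnj (g z)) has_derivative (\<lambda>h. of_real (Re h) * cnj (g1) + of_real (Im h) * (- \<i> * cnj (g1)))) (at z)"
    if "(g has_field_derivative g1) (at z)" for g g1 z
    using has_derivative_cnj[OF that[unfolded has_field_derivative_def]]
    by (rule has_derivative_eq_rhs) (simp add: fun_eq_iff complex_eq_iff algebra_simps)
  have h3: "((\<lambda>z. \<i> * g z) has_derivative (\<lambda>h. of_real (Re h) * (\<i> * g1) + of_real (Im h) * (- g1))) (at z)"
    if "(g has_field_derivative g1) (at z)" for g g1 z
    using has_derivative_mult_right[OF h1[OF that], of \<i>]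
    by (rule has_derivative_eq_rhs) (simp add: fun_eq_iff algebra_simps)
  have h4: "((\<lambda>z. - \<i> * cnj (g z)) has_derivative (\<lambda>h. of_real (Re h) * (- \<i> * cnj (g1)) + of_real (Im h) * (- cnj (g1)))) (at z)"
    if "(g has_field_derivative g1) (at z)" for g g1 z
    using has_derivative_mult_right[OF h2[OF that], of "- \<i>"]
    by (rule has_derivative_eq_rhs) (simp add: fun_eq_iff algebra_simps)
  show "harmonic_C2_on S f"
    unfolding harmonic_C2_on_def
    apply (rule exI[of _ f1], rule exI[of _ "\<lambda>z. \<i> * f1 z"])
    apply (rule exI[of _ f2], rule exI[of _ "\<lambda>z. \<i> * f2 z"])
    apply (rule exI[of _ "\<lambda>z. \<i> * f2 z"], rule exI[of _ "\<lambda>z. - f2 z"])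
    apply (intro conjI ballI)
    subgoal for z by (rule h1, rule d1)
    subgoal for z by (rule h1, rule d2)
    subgoal for z by (rule h3, rule d2)
    using c by (auto intro!: continuous_intros)
  show "harmonic_C2_on S (\<lambda>z. cnj (f z))"
    unfolding harmonic_C2_on_def
    apply (rule exI[of _ "\<lambda>z. cnj (f1 z)"], rule exI[of _ "\<lambda>z. - \<i> * cnj (f1 z)"])
    apply (rule exI[of _ "\<lambda>z. cnj (f2 z)"], rule exI[of _ "\<lambda>z. - \<i> * cnj (f2 z)"])
    apply (rule exI[of _ "\<lambda>z. - \<i> * cnj (f2 z)"], rule exI[of _ "\<lambda>z. - cnj (f2 z)"])
    apply (intro conjI ballI)
    subgoal for z by (rule h2, rule d1)
    subgoal for z by (rule h2, rule d2)
    subgoal for z by (rule h4, rule d2)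
    using c by (auto intro!: continuous_intros)
qed

lemma real_to_cx:
  assumes "(g has_derivative (\<lambda>h. Re h * a + Im h * b)) F"
  shows "((\<lambda>z. of_real (g z)::complex) has_derivative (\<lambda>h. of_real (Re h) * of_real a + of_real (Im h) * of_real b)) F"
  using has_derivative_of_real[OF assms] by simp

definition lg :: "complex \<Rightarrow> complex" where
  "lg z = of_real (ln ((Re z)\<^sup>2 + (Im z)\<^sup>2) / 2)"

lemma harm_lg:
  assumes "0 \<notin> S"
  shows "harmonic_C2_on S lg"
proof -
  define q where "q z = (Re z)\<^sup>2 + (Im z)\<^sup>2" for z
  have qpos: "q z > 0" if "z \<in> S" for z
    using assms that by (metis q_def complex_eq_0 not_less_iff_gr_or_eq sum_power2_gt_zero_iff)
  have dq: "(q has_derivative (\<lambda>h. 2 * Re z * Re h + 2 * Im z * Im h)) (at z)" for z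
    unfolding q_def
    by (auto intro!: derivative_eq_intros simp: fun_eq_iff)
  show ?thesis
    unfolding harmonic_C2_on_def
    apply (rule exI[of _ "\<lambda>z. of_real (Re z / q z)"], rule exI[of _ "\<lambda>z. of_real (Im z / q z)"])
    apply (rule exI[of _ "\<lambda>z. of_real ((Im z ^ 2 - Re z ^ 2) / (q z)\<^sup>2)"])
    apply (rule exI[of _ "\<lambda>z. of_real (- 2 * Re z * Im z / (q z)\<^sup>2)"])
    apply (rule exI[of _ "\<lambda>z. of_real (- 2 * Re z * Im z / (q z)\<^sup>2)"])
    apply (rule exI[of _ "\<lambda>z. of_real ((Re z ^ 2 - Im z ^ 2) / (q z)\<^sup>2)"])
    apply (intro conjI ballI)
    subgoal for z
      unfolding lg_def q_def[symmetric]
      using qpos[of z]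
      apply (intro real_to_cx has_derivative_eq_rhs[OF has_derivative_divide'[OF has_derivative_ln[OF _ dq]]])
      by (auto intro!: derivative_eq_intros simp: fun_eq_iff field_simps power2_eq_square)
    subgoal for z
      using qpos[of z]
      apply (intro real_to_cx has_derivative_eq_rhs[OF has_derivative_divide'[OF _ dq]])
       apply (auto intro!: derivative_eq_intros simp: fun_eq_iff field_simps power2_eq_square q_def)
      by (simp add: add_divide_distrib[symmetric] diff_divide_distrib[symmetric] algebra_simps)
    subgoal for z
      using qpos[of z]
      apply (intro real_to_cx has_derivative_eq_rhs[OF has_derivative_divide'[OF _ dq]])
       apply (auto intro!: derivative_eq_intros simp: fun_eq_iff field_simps power2_eq_square q_def)
      by (simp add: add_divide_distrib[symmetric] diff_divide_distrib[symmetric] algebra_simps)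
    subgoal for z
      using qpos[of z] by (simp add: add_divide_distrib[symmetric])
    using qpos unfolding q_def
    apply (auto intro!: continuous_intros)
    by (metis of_real_add of_real_power of_real_eq_0_iff less_irrefl)+

qed



definition P :: "int \<Rightarrow> complex \<Rightarrow> complex" where
  "P j z = (if 0 \<le> j then z ^ nat j else cnj (z ^ nat (- j)))"

definition Q :: "int \<Rightarrow> complex \<Rightarrow> complex" where
  "Q j z = (if j = 0 then lg z else if 0 < j then cnj (1 / z ^ nat j) else 1 / z ^ nat (- j))"

definition ee :: "int \<Rightarrow> real \<Rightarrow> complex" where
  "ee j \<theta> = exp (\<i> * of_int j * complex_of_real \<theta>)"

definition pr :: "int \<Rightarrow> real \<Rightarrow> real" where
  "pr j r = r ^ nat \<bar>j\<bar>"
definition qr :: "int \<Rightarrow> real \<Rightarrow> real" where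
  "qr j r = (if j = 0 then ln r else 1 / r ^ nat \<bar>j\<bar>)"
definition pd :: "int \<Rightarrow> real \<Rightarrow> real" where
  "pd j r = real (nat \<bar>j\<bar>) * r ^ nat \<bar>j\<bar> / r"
definition qd :: "int \<Rightarrow> real \<Rightarrow> real" where
  "qd j r = (if j = 0 then 1 / r else - real (nat \<bar>j\<bar>) / (r ^ nat \<bar>j\<bar> * r))"

lemma harm_pow: "harmonic_C2_on S (\<lambda>z. z ^ n)" "harmonic_C2_on S (\<lambda>z. cnj (z ^ n))"
proof -
  have d1: "((\<lambda>z. z ^ n) has_field_derivative of_nat n * z ^ (n - 1)) (at z)" for z :: complex
    using DERIV_power[OF DERIV_ident, of n z UNIV] by simp
  have d2: "((\<lambda>z. of_nat n * z ^ (n - 1)) has_field_derivative of_nat n * (of_nat (n - 1) * z ^ (n - 1 - 1))) (at z)" for z :: complex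
    using DERIV_cmult[OF DERIV_power[OF DERIV_ident, of "n - 1" z UNIV], of "of_nat n"] by simp
  show "harmonic_C2_on S (\<lambda>z. z ^ n)"
    by (rule harm_holo(1)[OF d1 d2]) (auto intro!: continuous_intros)
  show "harmonic_C2_on S (\<lambda>z. cnj (z ^ n))"
    by (rule harm_holo(2)[OF d1 d2]) (auto intro!: continuous_intros)
qed

lemma inv_pow_deriv:
  fixes z :: complex
  assumes "z \<noteq> 0"
  shows "((\<lambda>z. 1 / z ^ n) has_field_derivative - of_nat n / z ^ (n + 1)) (at z)"
    using assms
    apply (cases n)
     apply (auto intro!: derivative_eq_intros simp: field_simps power_add power_Suc[symmetric] simp del: power_Suc)
  by (simp add: algebra_simps)

lemma harm_inv_pow:
  assumes "0 \<notin> S"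
  shows "harmonic_C2_on S (\<lambda>z. 1 / z ^ n)" "harmonic_C2_on S (\<lambda>z. cnj (1 / z ^ n))"
proof -
  have d1: "((\<lambda>z. 1 / z ^ n) has_field_derivative - of_nat n / z ^ (n + 1)) (at z)" if "z \<in> S" for z :: complex
    using that assms by (intro inv_pow_deriv) auto
  have d2: "((\<lambda>z. - of_nat n / z ^ (n + 1)) has_field_derivative (- of_nat n) * (- of_nat (n + 1) / z ^ (n + 1 + 1))) (at z)"
    if "z \<in> S" for z :: complex
  proof -
    have "z \<noteq> 0" using that assms by auto
    have "(\<lambda>z::complex. - of_nat n / z ^ (n + 1)) = (\<lambda>z. (- of_nat n) * (1 / z ^ (n+1)))" by auto
    with DERIV_cmult[OF inv_pow_deriv[OF \<open>z \<noteq> 0\<close>, of "n+1"], of "- of_nat n"]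
    show ?thesis by simp
  qed
  show "harmonic_C2_on S (\<lambda>z. 1 / z ^ n)"
    using assms by (intro harm_holo(1)[OF d1 d2]) (auto intro!: continuous_intros)
  show "harmonic_C2_on S (\<lambda>z. cnj (1 / z ^ n))"
    using assms by (intro harm_holo(2)[OF d1 d2]) (auto intro!: continuous_intros)
qed

lemma ee_cis: "ee j \<theta> = cis (of_int j * \<theta>)"
  unfolding ee_def cis_conv_exp by (simp add: mult.assoc)

lemma polar_pow: "(complex_of_real r * cis \<theta>) ^ n = of_real (r ^ n) * cis (real n * \<theta>)"
  by (simp add: power_mult_distrib Complex.DeMoivre)

lemma P_polar: "P j (complex_of_real r * cis \<theta>) = of_real (pr j r) * ee j \<theta>"
proof (cases "0 \<le> j")
  case True
  then show ?thesis unfolding P_def pr_def ee_cis polar_pow by simp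
next
  case False
  then have "real (nat (- j)) = - of_int j" by simp
  then show ?thesis using False unfolding P_def pr_def ee_cis polar_pow
    by (simp add: cis_cnj)
qed

lemma Q_polar:
  assumes "r > 0"
  shows "Q j (complex_of_real r * cis \<theta>) = of_real (qr j r) * ee j \<theta>"
proof -
  consider "j = 0" | "0 < j" | "j < 0" by linarith
  then show ?thesis
  proof cases
    case 1
    have "(r * cos \<theta>)\<^sup>2 + (r * sin \<theta>)\<^sup>2 = r ^ 2"
      by (simp add: power_mult_distrib algebra_simps flip: distrib_left)
    then show ?thesis using 1 assms unfolding Q_def qr_def ee_def lg_def
      by (simp add: ln_realpow)
  next
    case 2
    then show ?thesis using assms unfolding Q_def qr_def ee_cis polar_pow
      by (simp add: cis_cnj divide_inverse inverse_mult_distrib cis_inverse)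
  next
    case 3
    then have "real (nat (- j)) = - of_int j" by simp
    then show ?thesis using 3 assms unfolding Q_def qr_def ee_cis polar_pow
      by (simp add: divide_inverse inverse_mult_distrib cis_inverse)
  qed
qed

lemma harm_P: "harmonic_C2_on S (P j)"
proof (cases "0 \<le> j")
  case True
  then have "P j = (\<lambda>z. z ^ nat j)" by (auto simp: P_def fun_eq_iff)
  then show ?thesis using harm_pow(1) by simp
next
  case False
  then have "P j = (\<lambda>z. cnj (z ^ nat (- j)))" by (auto simp: P_def fun_eq_iff)
  then show ?thesis using harm_pow(2) by simp
qed

lemma harm_Q: assumes "0 \<notin> S" shows "harmonic_C2_on S (Q j)"
proof -
  consider "j = 0" | "0 < j" | "j < 0" by linarith
  then show ?thesis
  proof cases
    case 1
    then have "Q j = lg" by (auto simp: Q_def fun_eq_iff)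
    then show ?thesis using harm_lg[OF assms] by simp
  next
    case 2
    then have "Q j = (\<lambda>z. cnj (1 / z ^ nat j))" by (auto simp: Q_def fun_eq_iff)
    then show ?thesis using harm_inv_pow(2)[OF assms] by simp
  next
    case 3
    then have "Q j = (\<lambda>z. 1 / z ^ nat (- j))" by (auto simp: Q_def fun_eq_iff)
    then show ?thesis using harm_inv_pow(1)[OF assms] by simp
  qed
qed

lemma cont_P: "continuous_on S (P j)"
proof (cases "0 \<le> j")
  case True
  then have "P j = (\<lambda>z. z ^ nat j)" by (auto simp: P_def fun_eq_iff)
  then show ?thesis by (auto intro!: continuous_intros)
next
  case False
  then have "P j = (\<lambda>z. cnj (z ^ nat (- j)))" by (auto simp: P_def fun_eq_iff)
  then show ?thesis by (auto intro!: continuous_intros)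
qed

lemma cont_lg: assumes "0 \<notin> S" shows "continuous_on S lg"
proof -
  have "(Re z)\<^sup>2 + (Im z)\<^sup>2 > 0" if "z \<in> S" for z
    using assms that by (metis complex_eq_0 not_less_iff_gr_or_eq sum_power2_gt_zero_iff)
  then show ?thesis unfolding lg_def
    by (intro continuous_on_of_real continuous_intros) (use \<open>\<And>z. z \<in> S \<Longrightarrow> _\<close> in force)+
qed

lemma cont_Q: assumes "0 \<notin> S" shows "continuous_on S (Q j)"
proof -
  have "continuous_on S (\<lambda>z. 1 / z ^ n)" for n
    using assms by (intro continuous_intros) auto
  then show ?thesis using cont_lg[OF assms] unfolding Q_def
    using assms by (cases "j = 0"; cases "0 < j") (auto intro!: continuous_intros)
qed

lemma pr_deriv:
  assumes x: "x > 0" shows "(pr j has_real_derivative pd j x) (at x within T)"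
proof (cases "nat \<bar>j\<bar>")
  case 0
  then show ?thesis by (simp add: pr_def[abs_def] pd_def)
next
  case (Suc m)
  have "((\<lambda>r. r ^ Suc m) has_real_derivative (1 + of_nat m) * (1 * x ^ m)) (at x within T)"
    by (rule DERIV_power_Suc[OF DERIV_ident])
  then show ?thesis unfolding pr_def[abs_def] pd_def Suc
    by (rule DERIV_cong) (use x in \<open>simp add: field_simps\<close>)
qed

lemma qr_deriv: "x > 0 \<Longrightarrow> (qr j has_real_derivative qd j x) (at x within T)"
proof -
  assume x: "x > 0"
  show ?thesis
  proof (cases "j = 0")
    case True
    have "(ln has_real_derivative 1 / x) (at x within T)"
      using x by (auto intro!: derivative_eq_intros)
    then show ?thesis using True unfolding qr_def qd_def by simp
  next
    case False
      have "((\<lambda>r. inverse (pr j r)) has_real_derivative - (pd j x * inverse (pr j x ^ Suc (Suc 0)))) (at x within T)"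
        using x by (intro DERIV_inverse_fun pr_deriv) (auto simp: pr_def)
      then have "((\<lambda>r. inverse (pr j r)) has_real_derivative qd j x) (at x within T)"
        by (rule DERIV_cong) (use x False in \<open>simp add: qd_def pr_def pd_def field_simps power2_eq_square\<close>)
      moreover have "(\<lambda>r. inverse (pr j r)) = qr j" using False unfolding qr_def[abs_def] pr_def by (simp add: divide_inverse)
      ultimately show ?thesis by simp
  qed
qed

definition G :: "int set \<Rightarrow> (int \<Rightarrow> complex) \<Rightarrow> (int \<Rightarrow> complex) \<Rightarrow> (int \<Rightarrow> complex) \<Rightarrow> complex \<Rightarrow> complex" where
  "G S c A B z = (\<Sum>j\<in>S. c j * (A j * P j z + B j * Q j z))"

lemma G_cont:
  assumes "0 < Ri"
  shows "continuous_on (closed_annulus Ri Rd) (G S c A B)"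
proof -
  have "0 \<notin> closed_annulus Ri Rd" using assms by (auto simp: closed_annulus_def)
  then show ?thesis unfolding G_def[abs_def]
    by (intro continuous_intros cont_P cont_Q)
qed

lemma G_harm:
  assumes "0 \<le> Ri" "finite S"
  shows "harmonic_C2_on (annulus Ri Rd) (G S c A B)"
proof -
  have z: "0 \<notin> annulus Ri Rd" using assms by (auto simp: annulus_def)
  have e: "G S c A B = (\<lambda>z. \<Sum>j\<in>S. (c j * A j) * P j z + (c j * B j) * Q j z)"
    by (auto simp: G_def fun_eq_iff algebra_simps)
  have "harmonic_C2_on (annulus Ri Rd) (\<lambda>z. \<Sum>j\<in>S. (c j * A j) * P j z + (c j * B j) * Q j z)"
    using assms(2) by (intro harm_sum harm_lin harm_P harm_Q[OF z])
  then show ?thesis unfolding e .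
qed

lemma G_polar:
  assumes "r > 0"
  shows "G S c A B (complex_of_real r * cis \<theta>) =
    (\<Sum>j\<in>S. c j * (A j * of_real (pr j r) + B j * of_real (qr j r)) * ee j \<theta>)"
  unfolding G_def P_polar Q_polar[OF assms]
  by (simp add: algebra_simps)

lemma G_deriv:
  assumes "0 < Ri" "x \<in> {Ri..Rd}"
  shows "((\<lambda>r. G S c A B (complex_of_real r * cis \<theta>)) has_vector_derivative
     (\<Sum>j\<in>S. c j * (A j * of_real (pd j x) + B j * of_real (qd j x)) * ee j \<theta>)) (at x within {Ri..Rd})"
proof -
  have x: "x > 0" using assms by auto
  have "((\<lambda>r. \<Sum>j\<in>S. c j * (A j * of_real (pr j r) + B j * of_real (qr j r)) * ee j \<theta>) has_vector_derivative
     (\<Sum>j\<in>S. c j * (A j * of_real (pd j x) + B j * of_real (qd j x)) * ee j \<theta>)) (at x within {Ri..Rd})"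
    by (intro has_vector_derivative_sum has_vector_derivative_mult_left has_vector_derivative_mult_right
        has_vector_derivative_add has_vector_derivative_of_real pr_deriv qr_deriv x)
  then show ?thesis
    by (rule has_vector_derivative_transform_within[where d=1]) (use assms in \<open>auto simp: G_polar\<close>)
qed



lemma second_deriv_max:
  fixes g g' :: "real \<Rightarrow> real"
  assumes e: "e > 0" and d: "\<And>t. \<bar>t\<bar> < e \<Longrightarrow> (g has_real_derivative g' t) (at t)"
    and d2: "(g' has_real_derivative c) (at 0)" and mx: "\<And>t. \<bar>t\<bar> < e \<Longrightarrow> g t \<le> g 0"
  shows "c \<le> 0"
proof (rule ccontr)
  assume "\<not> c \<le> 0" hence c: "c > 0" by simp
  have g0: "g' 0 = 0"
    using DERIV_local_max[OF d[of 0] e] mx e by auto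
  from d2 have "((\<lambda>h. (g' (0 + h) - g' 0) / h) \<longlongrightarrow> c) (at 0)" by (simp add: DERIV_def)
  then have "((\<lambda>h. g' h / h) \<longlongrightarrow> c) (at 0)" using g0 by simp
  then have "\<forall>\<^sub>F h in at 0. g' h / h > 0" using c by (rule order_tendstoD(1))
  then obtain d where dpos: "d > 0" and dd: "\<And>h. h \<noteq> 0 \<Longrightarrow> dist h 0 < d \<Longrightarrow> g' h / h > 0"
    unfolding eventually_at by auto
  define t where "t = min d e / 2"
  have t: "0 < t" "t < d" "t < e" using dpos e by (auto simp: t_def)
  obtain z where z: "0 < z" "z < t" "g t - g 0 = (t - 0) * g' z"
    using MVT2[of 0 t g g'] t d by force
  have "g' z / z > 0" using dd[of z] z t by auto
  then have "g' z > 0" using z by (simp add: zero_less_divide_iff)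
  then have "g t > g 0" using z t by (simp add: algebra_simps)
  then show False using mx[of t] t by auto
qed

lemma dec_lemma:
  fixes f :: "real \<Rightarrow> real"
  assumes "(f has_real_derivative D) (at b within {a..b})" "D < 0" "a < b"
  shows "\<exists>r. a \<le> r \<and> r < b \<and> f r > f b"
proof -
  from assms(1) have "((\<lambda>y. (f y - f b) / (y - b)) \<longlongrightarrow> D) (at b within {a..b})"
    by (simp add: has_field_derivative_iff)
  then have "\<forall>\<^sub>F y in at b within {a..b}. (f y - f b) / (y - b) < 0"
    using assms(2) by (rule order_tendstoD(2))
  then obtain d where dpos: "d > 0" and dd: "\<And>y. y \<in> {a..b} \<Longrightarrow> y \<noteq> b \<Longrightarrow> dist y b < d \<Longrightarrow> (f y - f b) / (y - b) < 0"
    unfolding eventually_at by auto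
  define y where "y = max a (b - d / 2)"
  have y: "a \<le> y" "y < b" "dist y b < d" using dpos assms(3) by (auto simp: y_def dist_real_def)
  have "(f y - f b) / (y - b) < 0" using dd[of y] y by auto
  then have "f y - f b > 0" using y by (simp add: divide_less_0_iff)
  then show ?thesis using y by auto
qed

lemma line_x:
  assumes "(f has_derivative (\<lambda>h. of_real (Re h) * a + of_real (Im h) * b)) (at (p + of_real t))"
  shows "((\<lambda>s. Re (f (p + of_real s))) has_real_derivative Re a) (at t)"
proof -
  have i: "((\<lambda>s. p + of_real s) has_derivative (\<lambda>s. of_real s)) (at t)"
    by (auto intro!: derivative_eq_intros)
  have "((\<lambda>s. Re (f (p + of_real s))) has_derivative (\<lambda>s. Re (of_real (Re (of_real s :: complex)) * a + of_real (Im (of_real s :: complex)) * b))) (at t)"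
    using bounded_linear.has_derivative[OF bounded_linear_Re diff_chain_at[OF i assms]]
    by (simp add: o_def)
  then show ?thesis unfolding has_field_derivative_def
    by (rule has_derivative_eq_rhs) (auto simp: fun_eq_iff)
qed

lemma line_y:
  assumes "(f has_derivative (\<lambda>h. of_real (Re h) * a + of_real (Im h) * b)) (at (p + \<i> * of_real t))"
  shows "((\<lambda>s. Re (f (p + \<i> * of_real s))) has_real_derivative Re b) (at t)"
proof -
  have i: "((\<lambda>s. p + \<i> * of_real s) has_derivative (\<lambda>s. \<i> * of_real s)) (at t)"
    by (auto intro!: derivative_eq_intros)
  have "((\<lambda>s. Re (f (p + \<i> * of_real s))) has_derivative (\<lambda>s. Re (of_real (Re (\<i> * of_real s :: complex)) * a + of_real (Im (\<i> * of_real s :: complex)) * b))) (at t)"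
    using bounded_linear.has_derivative[OF bounded_linear_Re diff_chain_at[OF i assms]]
    by (simp add: o_def)
  then show ?thesis unfolding has_field_derivative_def
    by (rule has_derivative_eq_rhs) (auto simp: fun_eq_iff)
qed

lemma phi_d1:
  assumes "(x + t)\<^sup>2 + y\<^sup>2 \<noteq> 0"
  shows "((\<lambda>s. \<epsilon> / ((x + s)\<^sup>2 + y\<^sup>2)) has_real_derivative (- 2 * \<epsilon> * (x + t) / ((x + t)\<^sup>2 + y\<^sup>2)\<^sup>2)) (at t)"
  using assms by (auto intro!: derivative_eq_intros simp: field_simps power2_eq_square)

lemma phi_d2:
  assumes "x\<^sup>2 + y\<^sup>2 \<noteq> 0"
  shows "((\<lambda>s. - 2 * \<epsilon> * (x + s) / ((x + s)\<^sup>2 + y\<^sup>2)\<^sup>2) has_real_derivative (2 * \<epsilon> * (3 * x\<^sup>2 - y\<^sup>2) / (x\<^sup>2 + y\<^sup>2) ^ 3)) (at 0)"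
proof -
  define q where "q = x\<^sup>2 + y\<^sup>2"
  have q: "q \<noteq> 0" using assms q_def by auto
  have e: "(x\<^sup>2 + y\<^sup>2)\<^sup>2 \<noteq> 0" using q q_def by simp
  show ?thesis
    apply (rule DERIV_cong)
     apply (rule derivative_eq_intros refl | simp)+
    using assms apply (simp add: q_def)
     apply (rule refl)
    using e q
    apply (simp add: divide_simps)
    unfolding q_def
    by algebra
qed

lemma polar_of: "z = complex_of_real (cmod z) * cis (Arg z)"
  using rcis_cmod_Arg[of z] by (simp add: rcis_def)

lemma compact_cann: "compact (closed_annulus Ri Rd)"
proof -
  have e: "closed_annulus Ri Rd = cball 0 Rd \<inter> - ball 0 Ri"
    by (auto simp: closed_annulus_def)
  show ?thesis unfolding e by (intro compact_Int_closed compact_cball closed_Compl open_ball)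
qed

lemma open_ann: "open (annulus Ri Rd)"
proof -
  have "annulus Ri Rd = ball 0 Rd \<inter> - cball 0 Ri"
    by (auto simp: annulus_def)
  then show ?thesis by auto
qed

lemma uniq_re:
  assumes Ri: "0 < Ri" "Ri < Rd"
    and cont: "continuous_on (closed_annulus Ri Rd) w"
    and harm: "harmonic_C2_on (annulus Ri Rd) w"
    and outer: "\<And>\<theta>. normal_deriv_outer Ri Rd w \<theta> 0"
    and inner: "\<And>\<theta>. w (complex_of_real Ri * cis \<theta>) = 0"
    and z: "z \<in> closed_annulus Ri Rd"
  shows "Re (w z) \<le> 0"
proof -
  obtain ux uy uxx uxy uyx uyy where U:
    "\<And>z. z \<in> annulus Ri Rd \<Longrightarrow> (w has_derivative (\<lambda>h. of_real (Re h) * ux z + of_real (Im h) * uy z)) (at z)"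
    "\<And>z. z \<in> annulus Ri Rd \<Longrightarrow> (ux has_derivative (\<lambda>h. of_real (Re h) * uxx z + of_real (Im h) * uxy z)) (at z)"
    "\<And>z. z \<in> annulus Ri Rd \<Longrightarrow> (uy has_derivative (\<lambda>h. of_real (Re h) * uyx z + of_real (Im h) * uyy z)) (at z)"
    "\<And>z. z \<in> annulus Ri Rd \<Longrightarrow> uxx z + uyy z = 0"
    using harm unfolding harmonic_C2_on_def by blast
  let ?K = "closed_annulus Ri Rd"
  have qpos: "(Re y)\<^sup>2 + (Im y)\<^sup>2 > 0" if "y \<in> ?K" for y
  proof -
    have "cmod y \<ge> Ri" using that by (auto simp: closed_annulus_def)
    then have "cmod y > 0" using Ri by linarith
    then have "(cmod y)\<^sup>2 > 0" by simp
    then show ?thesis by (simp add: cmod_power2)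
  qed
  have annK: "annulus Ri Rd \<subseteq> ?K" by (auto simp: annulus_def closed_annulus_def)
  have key: "Re (w z) \<le> \<epsilon> / Ri\<^sup>2" if eps: "\<epsilon> > 0" for \<epsilon>
  proof -
    define \<phi> where "\<phi> y = \<epsilon> / ((Re y)\<^sup>2 + (Im y)\<^sup>2)" for y
    define Uf where "Uf y = Re (w y) + \<phi> y" for y
    have contU: "continuous_on ?K Uf"
      unfolding Uf_def \<phi>_def using qpos
      by (intro continuous_intros cont) (metis less_irrefl)
    obtain p where pK: "p \<in> ?K" and pmax: "\<And>y. y \<in> ?K \<Longrightarrow> Uf y \<le> Uf p"
      using continuous_attains_sup[OF compact_cann _ contU] z by blast
    have phi_nn: "\<phi> y \<ge> 0" for y using eps by (simp add: \<phi>_def)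
    consider "cmod p = Ri" | "cmod p = Rd" | "Ri < cmod p \<and> cmod p < Rd"
      using pK unfolding closed_annulus_def by fastforce
    then show ?thesis
    proof cases
      case 1
      have "w p = 0" using inner[of "Arg p"] polar_of[of p] 1 by simp
      moreover have "\<phi> p = \<epsilon> / Ri\<^sup>2" using 1 by (simp add: \<phi>_def cmod_power2[symmetric])
      ultimately have "Uf p = \<epsilon> / Ri\<^sup>2" by (simp add: Uf_def)
      then show ?thesis using pmax[OF z] phi_nn[of z] by (simp add: Uf_def)
    next
      case 2
      define \<theta> where "\<theta> = Arg p"
      have pe: "p = complex_of_real Rd * cis \<theta>" using polar_of[of p] 2 by (simp add: \<theta>_def)
      have heq: "Uf (complex_of_real r * cis \<theta>) = Re (w (complex_of_real r * cis \<theta>)) + \<epsilon> / r\<^sup>2" for r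
      proof -
        have "(r * cos \<theta>)\<^sup>2 + (r * sin \<theta>)\<^sup>2 = r\<^sup>2"
          by (simp add: power_mult_distrib flip: distrib_left)
        then show ?thesis by (simp add: Uf_def \<phi>_def)
      qed
      have d1: "((\<lambda>r. Re (w (complex_of_real r * cis \<theta>))) has_real_derivative 0) (at Rd within {Ri..Rd})"
        using bounded_linear.has_vector_derivative[OF bounded_linear_Re outer[of \<theta>, unfolded normal_deriv_outer_def]]
        by (simp add: has_real_derivative_iff_has_vector_derivative)
      have d2: "((\<lambda>r. \<epsilon> / r\<^sup>2) has_real_derivative (- 2 * \<epsilon> / Rd ^ 3)) (at Rd within {Ri..Rd})"
        using Ri by (auto intro!: derivative_eq_intros simp: field_simps power2_eq_square power3_eq_cube)
      have "((\<lambda>r. Uf (complex_of_real r * cis \<theta>)) has_real_derivative 0 + (- 2 * \<epsilon> / Rd ^ 3)) (at Rd within {Ri..Rd})"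
        unfolding heq by (rule DERIV_add[OF d1 d2])
      moreover have "0 + (- 2 * \<epsilon> / Rd ^ 3) < 0" using eps Ri by simp
      ultimately obtain r where r: "Ri \<le> r" "r < Rd" "Uf (complex_of_real r * cis \<theta>) > Uf (complex_of_real Rd * cis \<theta>)"
        using dec_lemma Ri(2) by blast
      have "complex_of_real r * cis \<theta> \<in> ?K" using r Ri by (auto simp: closed_annulus_def norm_mult)
      from pmax[OF this] r(3) pe show ?thesis by simp
    next
      case 3
      then have pA: "p \<in> annulus Ri Rd" by (simp add: annulus_def)
      obtain e where e: "e > 0" "ball p e \<subseteq> annulus Ri Rd"
        using open_ann[unfolded open_contains_ball] pA by blast
      define x where "x = Re p"
      define y where "y = Im p"
      have q: "x\<^sup>2 + y\<^sup>2 > 0" using qpos[OF pK] by (simp add: x_def y_def)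
      have inA: "p + v \<in> annulus Ri Rd" if "cmod v < e" for v
        using e that by (auto simp: dist_norm)
      have hx: "Uf (p + of_real t) = Re (w (p + of_real t)) + \<epsilon> / ((x + t)\<^sup>2 + y\<^sup>2)" for t
        by (simp add: Uf_def \<phi>_def x_def y_def)
      have cx: "Re (uxx p) + 2 * \<epsilon> * (3 * x\<^sup>2 - y\<^sup>2) / (x\<^sup>2 + y\<^sup>2) ^ 3 \<le> 0"
      proof (rule second_deriv_max[OF e(1), where g = "\<lambda>t. Uf (p + of_real t)"
            and g' = "\<lambda>t. Re (ux (p + of_real t)) + (- 2 * \<epsilon> * (x + t) / ((x + t)\<^sup>2 + y\<^sup>2)\<^sup>2)"])
        fix t :: real assume t: "\<bar>t\<bar> < e"
        then have tA: "p + of_real t \<in> annulus Ri Rd" by (intro inA) simp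
        then have "(x + t)\<^sup>2 + y\<^sup>2 > 0" using qpos annK by (force simp: x_def y_def)
        then show "((\<lambda>t. Uf (p + of_real t)) has_real_derivative
            Re (ux (p + of_real t)) + (- 2 * \<epsilon> * (x + t) / ((x + t)\<^sup>2 + y\<^sup>2)\<^sup>2)) (at t)"
          unfolding hx by (intro DERIV_add line_x[OF U(1)[OF tA]] phi_d1) (auto simp del: sum_power2_eq_zero_iff)
        show "Uf (p + of_real t) \<le> Uf (p + of_real 0)" using pmax tA annK by auto
      next
        have "((\<lambda>t. Re (ux (p + of_real t))) has_real_derivative Re (uxx p)) (at 0)"
          by (rule line_x) (use U(2)[OF pA] in simp)
        then show "((\<lambda>t. Re (ux (p + of_real t)) + (- 2 * \<epsilon> * (x + t) / ((x + t)\<^sup>2 + y\<^sup>2)\<^sup>2)) has_real_derivative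
            Re (uxx p) + 2 * \<epsilon> * (3 * x\<^sup>2 - y\<^sup>2) / (x\<^sup>2 + y\<^sup>2) ^ 3) (at 0)"
          using q by (intro DERIV_add phi_d2) auto
      qed
      have hy: "Uf (p + \<i> * of_real t) = Re (w (p + \<i> * of_real t)) + \<epsilon> / ((y + t)\<^sup>2 + x\<^sup>2)" for t
        by (simp add: Uf_def \<phi>_def x_def y_def add.commute)
      have cy: "Re (uyy p) + 2 * \<epsilon> * (3 * y\<^sup>2 - x\<^sup>2) / (y\<^sup>2 + x\<^sup>2) ^ 3 \<le> 0"
      proof (rule second_deriv_max[OF e(1), where g = "\<lambda>t. Uf (p + \<i> * of_real t)"
            and g' = "\<lambda>t. Re (uy (p + \<i> * of_real t)) + (- 2 * \<epsilon> * (y + t) / ((y + t)\<^sup>2 + x\<^sup>2)\<^sup>2)"])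
        fix t :: real assume t: "\<bar>t\<bar> < e"
        then have tA: "p + \<i> * of_real t \<in> annulus Ri Rd" by (intro inA) (simp add: norm_mult)
        then have "(y + t)\<^sup>2 + x\<^sup>2 > 0" using qpos annK by (force simp: x_def y_def add.commute)
        then show "((\<lambda>t. Uf (p + \<i> * of_real t)) has_real_derivative
            Re (uy (p + \<i> * of_real t)) + (- 2 * \<epsilon> * (y + t) / ((y + t)\<^sup>2 + x\<^sup>2)\<^sup>2)) (at t)"
          unfolding hy by (intro DERIV_add line_y[OF U(1)[OF tA]] phi_d1) (auto simp del: sum_power2_eq_zero_iff)
        show "Uf (p + \<i> * of_real t) \<le> Uf (p + \<i> * of_real 0)" using pmax tA annK by auto
      next
        have "((\<lambda>t. Re (uy (p + \<i> * of_real t))) has_real_derivative Re (uyy p)) (at 0)"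
          by (rule line_y) (use U(3)[OF pA] in simp)
        then show "((\<lambda>t. Re (uy (p + \<i> * of_real t)) + (- 2 * \<epsilon> * (y + t) / ((y + t)\<^sup>2 + x\<^sup>2)\<^sup>2)) has_real_derivative
            Re (uyy p) + 2 * \<epsilon> * (3 * y\<^sup>2 - x\<^sup>2) / (y\<^sup>2 + x\<^sup>2) ^ 3) (at 0)"
          using q by (intro DERIV_add phi_d2) (auto simp: add.commute)
      qed
      have "Re (uxx p) + Re (uyy p) = 0" using U(4)[OF pA] by (metis plus_complex.sel(1) zero_complex.sel(1))
      moreover have "2 * \<epsilon> * (3 * x\<^sup>2 - y\<^sup>2) / (x\<^sup>2 + y\<^sup>2) ^ 3 + 2 * \<epsilon> * (3 * y\<^sup>2 - x\<^sup>2) / (y\<^sup>2 + x\<^sup>2) ^ 3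
          = 4 * \<epsilon> / (x\<^sup>2 + y\<^sup>2)\<^sup>2"
      proof -
        define Q where "Q = x\<^sup>2 + y\<^sup>2"
        have Q: "Q \<noteq> 0" "y\<^sup>2 + x\<^sup>2 = Q" using q by (auto simp: Q_def)
        have "2 * \<epsilon> * (3 * x\<^sup>2 - y\<^sup>2) / Q ^ 3 + 2 * \<epsilon> * (3 * y\<^sup>2 - x\<^sup>2) / Q ^ 3 = (4 * \<epsilon> * Q) / Q ^ 3"
          by (simp add: add_divide_distrib[symmetric] Q_def algebra_simps)
        also have "\<dots> = 4 * \<epsilon> / Q\<^sup>2" using Q by (simp add: power2_eq_square power3_eq_cube)
        finally show ?thesis unfolding Q(2) Q_def .
      qed
      moreover have "4 * \<epsilon> / (x\<^sup>2 + y\<^sup>2)\<^sup>2 > 0" using q eps by (intro divide_pos_pos) auto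
      ultimately show ?thesis using cx cy by linarith
    qed
  qed
  show ?thesis
  proof (rule ccontr)
    assume "\<not> Re (w z) \<le> 0"
    then have "Re (w z) * Ri\<^sup>2 / 2 > 0" using Ri by simp
    from key[OF this] have "Re (w z) \<le> Re (w z) / 2" using Ri by simp
    then show False using \<open>\<not> Re (w z) \<le> 0\<close> by simp
  qed
qed

lemma uniq:
  assumes Ri: "0 < Ri" "Ri < Rd"
    and cont: "continuous_on (closed_annulus Ri Rd) w"
    and harm: "harmonic_C2_on (annulus Ri Rd) w"
    and outer: "\<And>\<theta>. normal_deriv_outer Ri Rd w \<theta> 0"
    and inner: "\<And>\<theta>. w (complex_of_real Ri * cis \<theta>) = 0"
    and z: "z \<in> closed_annulus Ri Rd"
  shows "w z = 0"
proof -
  have sc: "Re (c * w z) \<le> 0" for c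
  proof (rule uniq_re[OF Ri _ _ _ _ z])
    show "continuous_on (closed_annulus Ri Rd) (\<lambda>z. c * w z)" by (intro continuous_intros cont)
    show "harmonic_C2_on (annulus Ri Rd) (\<lambda>z. c * w z)"
      using harm_lin[OF harm harm, of c 0] by simp
    show "normal_deriv_outer Ri Rd (\<lambda>z. c * w z) \<theta> 0" for \<theta>
      using has_vector_derivative_mult_right[OF outer[of \<theta>, unfolded normal_deriv_outer_def], of c]
      by (simp add: normal_deriv_outer_def)
    show "c * w (complex_of_real Ri * cis \<theta>) = 0" for \<theta> using inner by simp
  qed
  have "Re (w z) \<le> 0" using sc[of 1] by simp
  moreover have "- Re (w z) \<le> 0" using sc[of "-1"] by simp
  moreover have "Im (w z) \<le> 0" using sc[of "- \<i>"] by simp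
  moreover have "- Im (w z) \<le> 0" using sc[of "\<i>"] by simp
  ultimately show ?thesis by (simp add: complex_eq_iff)
qed



definition XX :: "real \<Rightarrow> int \<Rightarrow> real" where "XX r j = r ^ nat \<bar>j\<bar>"

definition A1 :: "real \<Rightarrow> real \<Rightarrow> int \<Rightarrow> real" where
  "A1 x y j = (if j = 0 then 1 else XX x j / ((XX x j)\<^sup>2 + (XX y j)\<^sup>2))"
definition B1 :: "real \<Rightarrow> real \<Rightarrow> int \<Rightarrow> real" where
  "B1 x y j = (if j = 0 then 0 else XX x j * (XX y j)\<^sup>2 / ((XX x j)\<^sup>2 + (XX y j)\<^sup>2))"
definition PP :: "real \<Rightarrow> real \<Rightarrow> int \<Rightarrow> real" where
  "PP x y j = - 4 * XX x j * (XX y j)\<^sup>2 * y / (real (nat \<bar>j\<bar>) * ((XX x j)\<^sup>2 + (XX y j)\<^sup>2)\<^sup>2)"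
definition A2 :: "real \<Rightarrow> real \<Rightarrow> int \<Rightarrow> real" where
  "A2 x y j = (if j = 0 then 2 * y * ln x else PP x y j)"
definition B2 :: "real \<Rightarrow> real \<Rightarrow> int \<Rightarrow> real" where
  "B2 x y j = (if j = 0 then - 2 * y else - PP x y j * (XX x j)\<^sup>2)"

lemma Cj_nz:
  assumes "0 < x" "0 < y" "j \<noteq> 0"
  shows "Cj x y j = 8 * (XX y j)\<^sup>2 * y * (XX x j)\<^sup>2 / (x * ((XX x j)\<^sup>2 + (XX y j)\<^sup>2)\<^sup>2)"
proof -
  define n where "n = nat \<bar>j\<bar>"
  have n: "\<bar>real_of_int j\<bar> = real n" "n \<ge> 1" using assms(3) by (auto simp: n_def)
  have t: "2 * \<bar>real_of_int j\<bar> = real (2 * n)" using n by simp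
  have e1: "r powr (2 * \<bar>real_of_int j\<bar>) = (r ^ n)\<^sup>2" if "r > 0" for r
    unfolding t using powr_realpow[OF that, of "2*n"] power_even_eq[of r n] by simp
  have e2: "y powr (2 * \<bar>real_of_int j\<bar> + 1) = (y ^ n)\<^sup>2 * y"
    unfolding powr_add e1[OF assms(2)] using assms by simp
  have e3: "x powr (2 * \<bar>real_of_int j\<bar> - 1) = (x ^ n)\<^sup>2 / x"
    unfolding powr_diff e1[OF assms(1)] using assms by simp
  show ?thesis unfolding Cj_def e2 e3 e1[OF assms(1)] e1[OF assms(2)] XX_def n_def[symmetric]
    by (simp add: divide_simps)
qed

lemma Cj_z:
  assumes "0 < x" "0 < y"
  shows "Cj x y 0 = 2 * y / x"
  using assms by (simp add: Cj_def powr_minus_divide)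

lemma coeffs:
  assumes x: "0 < x" and y: "0 < y"
  shows "A1 x y j * pr j x + B1 x y j * qr j x = 1"
    and "A1 x y j * pd j y + B1 x y j * qd j y = 0"
    and "A2 x y j * pr j x + B2 x y j * qr j x = 0"
    and "A2 x y j * pd j y + B2 x y j * qd j y = - 2 * (A1 x y j * pr j y + B1 x y j * qr j y)"
    and "A2 x y j * pd j x + B2 x y j * qd j x = - Cj x y j"
proof -
  have "(A1 x y j * pr j x + B1 x y j * qr j x = 1) \<and>
    (A1 x y j * pd j y + B1 x y j * qd j y = 0) \<and>
    (A2 x y j * pr j x + B2 x y j * qr j x = 0) \<and>
    (A2 x y j * pd j y + B2 x y j * qd j y = - 2 * (A1 x y j * pr j y + B1 x y j * qr j y)) \<and>
    (A2 x y j * pd j x + B2 x y j * qd j x = - Cj x y j)"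
  proof (cases "j = 0")
    case True
    then show ?thesis using x y by (simp add: A1_def B1_def A2_def B2_def pr_def qr_def pd_def qd_def Cj_z)
  next
    case False
    define X where "X = XX x j"
    define Y where "Y = XX y j"
    define N where "N = real (nat \<bar>j\<bar>)"
    have X: "X > 0" "x ^ nat \<bar>j\<bar> = X" using x by (auto simp: X_def XX_def)
    have Y: "Y > 0" "y ^ nat \<bar>j\<bar> = Y" using y by (auto simp: Y_def XX_def)
    have N: "N > 0" using False by (simp add: N_def)
    have D: "X\<^sup>2 + Y\<^sup>2 > 0" using X Y by (intro add_pos_pos) auto
    have a1: "A1 x y j = X / (X\<^sup>2 + Y\<^sup>2)" "B1 x y j = X * Y\<^sup>2 / (X\<^sup>2 + Y\<^sup>2)"
      using False by (simp_all add: A1_def B1_def X_def Y_def)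
    define PQ where "PQ = - 4 * X * Y\<^sup>2 * y / (N * (X\<^sup>2 + Y\<^sup>2)\<^sup>2)"
    have a2: "A2 x y j = PQ" "B2 x y j = - PQ * X\<^sup>2"
      using False by (simp_all add: A2_def B2_def PP_def PQ_def X_def Y_def N_def)
    have r: "pr j x = X" "pr j y = Y" "qr j x = 1 / X" "qr j y = 1 / Y"
       "pd j x = N * X / x" "pd j y = N * Y / y" "qd j x = - N / (X * x)" "qd j y = - N / (Y * y)"
      using False X Y by (simp_all add: pr_def qr_def pd_def qd_def N_def)
    have c: "Cj x y j = 8 * Y\<^sup>2 * y * X\<^sup>2 / (x * (X\<^sup>2 + Y\<^sup>2)\<^sup>2)"
      using Cj_nz[OF x y False] by (simp add: X_def Y_def)
    have Dn: "X\<^sup>2 + Y\<^sup>2 \<noteq> 0" using D by linarith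
    define Dv where "Dv = X\<^sup>2 + Y\<^sup>2"
    have Dv: "Dv \<noteq> 0" using Dn Dv_def by simp
    have q1: "X / Dv * X + X * Y\<^sup>2 / Dv * (1 / X) = 1"
      using X Dv by (simp add: field_simps) (simp add: Dv_def power2_eq_square)
    have q2: "X / Dv * (N * Y / y) + X * Y\<^sup>2 / Dv * (- N / (Y * y)) = 0"
      using Y y Dv by (simp add: field_simps power2_eq_square)
    have q3: "PQ * X + - PQ * X\<^sup>2 * (1 / X) = 0"
      using X by (simp add: field_simps power2_eq_square)
    have q4: "PQ * (N * Y / y) + - PQ * X\<^sup>2 * (- N / (Y * y)) =
        - 2 * (X / Dv * Y + X * Y\<^sup>2 / Dv * (1 / Y))"
      using X Y N y Dv unfolding PQ_def Dv_def[symmetric] by (simp add: field_simps) (simp add: Dv_def algebra_simps power2_eq_square)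
    have q5: "PQ * (N * X / x) + - PQ * X\<^sup>2 * (- N / (X * x)) =
        - (8 * Y\<^sup>2 * y * X\<^sup>2 / (x * Dv\<^sup>2))"
      using X Y N x Dv unfolding PQ_def Dv_def[symmetric] by (simp add: field_simps power2_eq_square)
    show ?thesis unfolding a1 a2 r c Dv_def[symmetric] using q1 q2 q3 q4 q5 by blast
  qed
  then show "A1 x y j * pr j x + B1 x y j * qr j x = 1"
    and "A1 x y j * pd j y + B1 x y j * qd j y = 0"
    and "A2 x y j * pr j x + B2 x y j * qr j x = 0"
    and "A2 x y j * pd j y + B2 x y j * qd j y = - 2 * (A1 x y j * pr j y + B1 x y j * qr j y)"
    and "A2 x y j * pd j x + B2 x y j * qd j x = - Cj x y j" by auto
qed



lemma harm_diff: "harmonic_C2_on S u \<Longrightarrow> harmonic_C2_on S v \<Longrightarrow> harmonic_C2_on S (\<lambda>z. u z - v z)"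
  using harm_lin[of S u v 1 "-1"] by simp

lemma ccoeffs:
  assumes x: "0 < x" and y: "0 < y"
  shows "complex_of_real (A1 x y j) * of_real (pr j x) + of_real (B1 x y j) * of_real (qr j x) = 1"
    and "complex_of_real (A1 x y j) * of_real (pd j y) + of_real (B1 x y j) * of_real (qd j y) = 0"
    and "complex_of_real (A2 x y j) * of_real (pr j x) + of_real (B2 x y j) * of_real (qr j x) = 0"
    and "complex_of_real (A2 x y j) * of_real (pd j y) + of_real (B2 x y j) * of_real (qd j y) =
         - 2 * (of_real (A1 x y j) * of_real (pr j y) + of_real (B1 x y j) * of_real (qr j y))"
    and "complex_of_real (A2 x y j) * of_real (pd j x) + of_real (B2 x y j) * of_real (qd j x) = - of_real (Cj x y j)"
proof -
  note c = coeffs[OF x y, of j]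
  show "complex_of_real (A1 x y j) * of_real (pr j x) + of_real (B1 x y j) * of_real (qr j x) = 1"
    using arg_cong[OF c(1), of complex_of_real] by simp
  show "complex_of_real (A1 x y j) * of_real (pd j y) + of_real (B1 x y j) * of_real (qd j y) = 0"
    using arg_cong[OF c(2), of complex_of_real] by simp
  show "complex_of_real (A2 x y j) * of_real (pr j x) + of_real (B2 x y j) * of_real (qr j x) = 0"
    using arg_cong[OF c(3), of complex_of_real] by simp
  show "complex_of_real (A2 x y j) * of_real (pd j y) + of_real (B2 x y j) * of_real (qd j y) =
         - 2 * (of_real (A1 x y j) * of_real (pr j y) + of_real (B1 x y j) * of_real (qr j y))"
    using arg_cong[OF c(4), of complex_of_real] by simp
  show "complex_of_real (A2 x y j) * of_real (pd j x) + of_real (B2 x y j) * of_real (qd j x) = - of_real (Cj x y j)"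
    using arg_cong[OF c(5), of complex_of_real] by simp
qed

lemma J_formula:
  assumes Ri: "0 < Ri" "Ri < Rd"
    and ms: "mixed_solution Ri Rd qbar \<omega>s vs"
    and vsb: "\<And>\<theta>. vs (complex_of_real Rd * cis \<theta>) = ubar \<theta>"
    and mk: "mixed_solution Ri Rd qbar \<omega>k vk"
    and mh: "mixed_solution Ri Rd (\<lambda>\<theta>. 2 * (vk (complex_of_real Rd * cis \<theta>) - ubar \<theta>)) (\<lambda>\<theta>. 0) vh"
    and gr: "\<And>\<theta>. normal_deriv_inner Ri Rd vh \<theta> (- Jk \<theta>)"
    and fin: "finite S"
    and mu: "\<And>\<theta>. \<omega>s \<theta> - \<omega>k \<theta> = (\<Sum>j\<in>S. c j * ee j \<theta>)"
  shows "Jk \<theta> = - (\<Sum>j\<in>S. c j * of_real (Cj Ri Rd j) * ee j \<theta>)"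
proof -
  have Rd: "0 < Rd" using Ri by simp
  define a1 where "a1 j = complex_of_real (A1 Ri Rd j)" for j
  define b1 where "b1 j = complex_of_real (B1 Ri Rd j)" for j
  define a2 where "a2 j = complex_of_real (A2 Ri Rd j)" for j
  define b2 where "b2 j = complex_of_real (B2 Ri Rd j)" for j
  define W where "W = G S c a1 b1"
  define V where "V = G S c a2 b2"
  note cc = ccoeffs[OF Ri(1) Rd, folded a1_def b1_def a2_def b2_def]
  have RiI: "Ri \<in> {Ri..Rd}" and RdI: "Rd \<in> {Ri..Rd}" using Ri by auto
  have inK: "complex_of_real r * cis t \<in> closed_annulus Ri Rd" if "r \<in> {Ri..Rd}" for r t
    using that Ri by (auto simp: closed_annulus_def norm_mult)
  have w0: "vs z - vk z - W z = 0" if z: "z \<in> closed_annulus Ri Rd" for z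
  proof (rule uniq[OF Ri _ _ _ _ z])
    show "continuous_on (closed_annulus Ri Rd) (\<lambda>z. vs z - vk z - W z)"
      using ms mk G_cont[OF Ri(1)] unfolding mixed_solution_def W_def by (intro continuous_intros) auto
    show "harmonic_C2_on (annulus Ri Rd) (\<lambda>z. vs z - vk z - W z)"
      using ms mk G_harm[of Ri S, OF _ fin] Ri unfolding mixed_solution_def W_def
      by (intro harm_diff) auto
    show "normal_deriv_outer Ri Rd (\<lambda>z. vs z - vk z - W z) t 0" for t
    proof -
      have "((\<lambda>r. vs (complex_of_real r * cis t) - vk (complex_of_real r * cis t) - W (complex_of_real r * cis t))
        has_vector_derivative (qbar t - qbar t - (\<Sum>j\<in>S. c j * (a1 j * of_real (pd j Rd) + b1 j * of_real (qd j Rd)) * ee j t)))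
        (at Rd within {Ri..Rd})"
        using ms mk unfolding mixed_solution_def normal_deriv_outer_def W_def
        by (intro has_vector_derivative_diff G_deriv[OF Ri(1) RdI]) auto
      then show ?thesis unfolding normal_deriv_outer_def using cc(2) by simp
    qed
    show "vs (complex_of_real Ri * cis t) - vk (complex_of_real Ri * cis t) - W (complex_of_real Ri * cis t) = 0" for t
      using ms mk mu[of t] unfolding mixed_solution_def W_def G_polar[OF Ri(1)] using cc(1) by simp
  qed
  have vkb: "vk (complex_of_real Rd * cis t) - ubar t =
      - (\<Sum>j\<in>S. c j * (a1 j * of_real (pr j Rd) + b1 j * of_real (qr j Rd)) * ee j t)" for t
    using w0[OF inK[OF RdI, of t]] vsb[of t] unfolding W_def G_polar[OF Rd] by (simp add: algebra_simps)
  have v0: "vh z - V z = 0" if z: "z \<in> closed_annulus Ri Rd" for z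
  proof (rule uniq[OF Ri _ _ _ _ z])
    show "continuous_on (closed_annulus Ri Rd) (\<lambda>z. vh z - V z)"
      using mh G_cont[OF Ri(1)] unfolding mixed_solution_def V_def by (intro continuous_intros) auto
    show "harmonic_C2_on (annulus Ri Rd) (\<lambda>z. vh z - V z)"
      using mh G_harm[of Ri S, OF _ fin] Ri unfolding mixed_solution_def V_def
      by (intro harm_diff) auto
    show "normal_deriv_outer Ri Rd (\<lambda>z. vh z - V z) t 0" for t
    proof -
      have "((\<lambda>r. vh (complex_of_real r * cis t) - V (complex_of_real r * cis t))
        has_vector_derivative (2 * (vk (complex_of_real Rd * cis t) - ubar t) - (\<Sum>j\<in>S. c j * (a2 j * of_real (pd j Rd) + b2 j * of_real (qd j Rd)) * ee j t)))
        (at Rd within {Ri..Rd})"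
        using mh unfolding mixed_solution_def normal_deriv_outer_def V_def
        by (intro has_vector_derivative_diff G_deriv[OF Ri(1) RdI]) auto
      moreover have "2 * (vk (complex_of_real Rd * cis t) - ubar t) - (\<Sum>j\<in>S. c j * (a2 j * of_real (pd j Rd) + b2 j * of_real (qd j Rd)) * ee j t) = 0"
      proof -
        have "(\<Sum>j\<in>S. c j * (a2 j * of_real (pd j Rd) + b2 j * of_real (qd j Rd)) * ee j t)
          = (\<Sum>j\<in>S. (- 2) * (c j * (a1 j * of_real (pr j Rd) + b1 j * of_real (qr j Rd)) * ee j t))"
          unfolding cc(4) by (rule sum.cong) (auto simp: algebra_simps)
        also have "\<dots> = (- 2) * (\<Sum>j\<in>S. c j * (a1 j * of_real (pr j Rd) + b1 j * of_real (qr j Rd)) * ee j t)"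
          by (rule sum_distrib_left[symmetric])
        finally show ?thesis unfolding vkb by simp
      qed
      ultimately show ?thesis unfolding normal_deriv_outer_def by simp
    qed
    show "vh (complex_of_real Ri * cis t) - V (complex_of_real Ri * cis t) = 0" for t
      using mh unfolding mixed_solution_def V_def G_polar[OF Ri(1)] using cc(3) by simp
  qed
  have "((\<lambda>r. V (complex_of_real r * cis \<theta>)) has_vector_derivative
      (\<Sum>j\<in>S. c j * (a2 j * of_real (pd j Ri) + b2 j * of_real (qd j Ri)) * ee j \<theta>)) (at Ri within {Ri..Rd})"
    unfolding V_def by (rule G_deriv[OF Ri(1) RiI])
  then have d1: "((\<lambda>r. vh (complex_of_real r * cis \<theta>)) has_vector_derivative
      (\<Sum>j\<in>S. c j * (a2 j * of_real (pd j Ri) + b2 j * of_real (qd j Ri)) * ee j \<theta>)) (at Ri within {Ri..Rd})"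
  proof (rule has_vector_derivative_transform_within[where d=1])
    fix x' assume "x' \<in> {Ri..Rd}"
    from v0[OF inK[OF this, of \<theta>]] show "V (complex_of_real x' * cis \<theta>) = vh (complex_of_real x' * cis \<theta>)"
      by simp
  qed (use RiI in auto)
  have d2: "((\<lambda>r. vh (complex_of_real r * cis \<theta>)) has_vector_derivative Jk \<theta>) (at Ri within {Ri..Rd})"
    using gr[of \<theta>] unfolding normal_deriv_inner_def by simp
  have "Jk \<theta> = (\<Sum>j\<in>S. c j * (a2 j * of_real (pd j Ri) + b2 j * of_real (qd j Ri)) * ee j \<theta>)"
  proof -
    have cb: "cbox Ri Rd = {Ri..Rd}" by (rule cbox_interval)
    show ?thesis
      by (rule vector_derivative_unique_within_closed_interval[OF Ri(2), of Ri, unfolded cb, OF RiI d2 d1])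
  qed
  also have "\<dots> = - (\<Sum>j\<in>S. c j * of_real (Cj Ri Rd j) * ee j \<theta>)"
    unfolding cc(5) by (simp add: sum_negf[symmetric])
  finally show ?thesis .
qed



lemma Cj_pos: "0 < Ri \<Longrightarrow> 0 < Rd \<Longrightarrow> Cj Ri Rd j > 0"
proof -
  assume a: "0 < Ri" "0 < Rd"
  have "Ri powr (2 * \<bar>real_of_int j\<bar>) + Rd powr (2 * \<bar>real_of_int j\<bar>) > 0"
    using a by (intro add_pos_pos) auto
  then show ?thesis unfolding Cj_def using a by (intro divide_pos_pos mult_pos_pos) auto
qed

lemma Cj_abs: "Cj Ri Rd \<bar>j\<bar> = Cj Ri Rd j"
  unfolding Cj_def by simp

theorem theorem2:
  fixes Ri Rd :: real
    and ubar qbar \<omega>star :: "real \<Rightarrow> complex"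
    and \<omega> J' :: "nat \<Rightarrow> real \<Rightarrow> complex"
    and v vhat :: "nat \<Rightarrow> complex \<Rightarrow> complex"
    and \<rho> :: "nat \<Rightarrow> real"
    and M N :: nat
    and a :: "int \<Rightarrow> complex"
  assumes radii: "0 < Ri" "Ri < Rd"
    and exact: "\<exists>vs. mixed_solution Ri Rd qbar \<omega>star vs \<and>
                     (\<forall>\<theta>. vs (complex_of_real Rd * cis \<theta>) = ubar \<theta>)"
    and primary: "\<And>k. mixed_solution Ri Rd qbar (\<omega> k) (v k)"
    and adjoint: "\<And>k. mixed_solution Ri Rd
                     (\<lambda>\<theta>. 2 * (v k (complex_of_real Rd * cis \<theta>) - ubar \<theta>)) (\<lambda>\<theta>. 0) (vhat k)"
    and gradient: "\<And>k \<theta>. normal_deriv_inner Ri Rd (vhat k) \<theta> (- J' k \<theta>)"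
    and iteration: "\<And>k \<theta>. \<omega> (Suc k) \<theta> = \<omega> k \<theta> - complex_of_real (\<rho> k) * J' k \<theta>"
    and MN: "M \<le> N"
    and mu0: "\<And>\<theta>. \<omega>star \<theta> - \<omega> 0 \<theta> =
                 (\<Sum>j\<in>{j::int. int M \<le> \<bar>j\<bar> \<and> \<bar>j\<bar> \<le> int N}.
                     a j * exp (\<i> * of_int j * complex_of_real \<theta>))"
    and steps: "(\<forall>k\<le>N - M. \<rho> k = 1 / Cj Ri Rd (int (M + k))) \<or>
                (\<forall>k\<le>N - M. \<rho> k = 1 / Cj Ri Rd (int (N - k)))"
  shows "\<forall>\<theta>. \<omega>star \<theta> - \<omega> (N - M + 1) \<theta> = 0"
proof -
  obtain vs where ms: "mixed_solution Ri Rd qbar \<omega>star vs"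
    and vsb: "\<And>\<theta>. vs (complex_of_real Rd * cis \<theta>) = ubar \<theta>"
    using exact by blast
  define S where "S = {j::int. int M \<le> \<bar>j\<bar> \<and> \<bar>j\<bar> \<le> int N}"
  have fin: "finite S"
    by (rule finite_subset[of _ "{- int N..int N}"]) (auto simp: S_def)
  define b where "b k j = a j * (\<Prod>i<k. complex_of_real (1 - \<rho> i * Cj Ri Rd j))" for k j
  have claim: "\<omega>star \<theta> - \<omega> k \<theta> = (\<Sum>j\<in>S. b k j * ee j \<theta>)" for k \<theta>
  proof (induction k arbitrary: \<theta>)
    case 0
    then show ?case using mu0[of \<theta>] by (simp add: b_def S_def ee_def)
  next
    case (Suc k)
    have J: "J' k t = - (\<Sum>j\<in>S. b k j * of_real (Cj Ri Rd j) * ee j t)" for t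
      by (rule J_formula[OF radii ms vsb primary adjoint gradient fin Suc.IH])
    have "\<omega>star \<theta> - \<omega> (Suc k) \<theta> = (\<omega>star \<theta> - \<omega> k \<theta>) + of_real (\<rho> k) * J' k \<theta>"
      by (simp add: iteration)
    also have "\<dots> = (\<Sum>j\<in>S. b k j * ee j \<theta>) - (\<Sum>j\<in>S. of_real (\<rho> k) * (b k j * of_real (Cj Ri Rd j) * ee j \<theta>))"
      unfolding Suc.IH J by (simp add: sum_distrib_left)
    also have "\<dots> = (\<Sum>j\<in>S. b k j * ee j \<theta> - of_real (\<rho> k) * (b k j * of_real (Cj Ri Rd j) * ee j \<theta>))"
      by (simp add: sum_subtractf)
    also have "\<dots> = (\<Sum>j\<in>S. b (Suc k) j * ee j \<theta>)"
      by (rule sum.cong) (auto simp: b_def algebra_simps)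
    finally show ?case .
  qed
  have bz: "b (N - M + 1) j = 0" if j: "j \<in> S" for j
  proof -
    have Cp: "Cj Ri Rd j > 0" using Cj_pos radii by simp
    obtain i where i: "i < N - M + 1" "\<rho> i * Cj Ri Rd j = 1"
    proof (cases "\<forall>k\<le>N - M. \<rho> k = 1 / Cj Ri Rd (int (M + k))")
      case True
      define i where "i = nat \<bar>j\<bar> - M"
      have "int (M + i) = \<bar>j\<bar>" "i \<le> N - M" using j by (auto simp: S_def i_def)
      then have "\<rho> i = 1 / Cj Ri Rd j" using True Cj_abs by metis
      then show ?thesis using that[of i] Cp \<open>i \<le> N - M\<close> by simp
    next
      case False
      then have F: "\<forall>k\<le>N - M. \<rho> k = 1 / Cj Ri Rd (int (N - k))" using steps by blast
      define i where "i = N - nat \<bar>j\<bar>"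
      have "int (N - i) = \<bar>j\<bar>" "i \<le> N - M" using j by (auto simp: S_def i_def)
      then have "\<rho> i = 1 / Cj Ri Rd j" using F Cj_abs by metis
      then show ?thesis using that[of i] Cp \<open>i \<le> N - M\<close> by simp
    qed
    then have "(\<Prod>i<N - M + 1. complex_of_real (1 - \<rho> i * Cj Ri Rd j)) = 0"
    proof (intro prod_zero)
      show "\<exists>a\<in>{..<N - M + 1}. complex_of_real (1 - \<rho> a * Cj Ri Rd j) = 0"
        using i by (intro bexI[of _ i]) auto
    qed auto
    then show ?thesis by (simp add: b_def)
  qed
  show ?thesis
  proof
    fix \<theta>
    show "\<omega>star \<theta> - \<omega> (N - M + 1) \<theta> = 0" unfolding claim using bz by simp
  qed
qed

end
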